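(* Let $e(\tau,s)$ be a complete equation of state, let $s_0$ be fixed, and assume the isentrope $\tau\mapsto e(\tau,s_0)$ is convex. Let $\mathcal A=\{\bm u=(\rho,\bm m,E)\in\mathbb R^{d+2}:\rho>0,\ \rho\,\mathsf e(\bm u)\ge \rho\, e(\rho^{-1},s_0)\}$, where $\mathsf e(\bm u)=E/\rho-\|\bm m\|^2_{\ell^2}/(2\rho^2)$. Let $\mathcal V$ be a finite index set and, for each $i\in\mathcal V$, let $\mathcal I(i)\subset\mathcal V$ be an index set containing $i$. Let $\{\mathsf U_i^n\}_{i\in\mathcal V}\subset\mathcal A$, and suppose there exist $\hat\lambda_{ij}>0$ such that $\overline{\mathsf U}^n_{ij}(\hat\lambda_{ij})\in\mathcal A$ for each $i\in\mathcal V$ and all $j\in\mathcal I(i)$. Define $$\mathsf U_i^{n+1}=\sum_{k\in\mathcal I(i)}\omega^n_{ik}\mathsf U_k^n+\sum_{j\in\mathcal I(i)\setminus\{i\}}\mu^n_{ij}\,\overline{\mathsf U}^n_{ij}(\hat\lambda_{ij}),$$ where $\omega^n_{ik},\mu^n_{ij}\in[0,1]$ and $\sum_{k\in\mathcal I(i)}\omega^n_{ik}+\sum_{j\in\mathcal I(i)\setminus\{i\}}\mu^n_{ij}=1$. Then $\mathsf U_i^{n+1}\in\mathcal A$ for every $i\in\mathcal V$.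
   Context: $\overline{\mathsf U}^n_{ij}(\lambda)$ denotes the auxiliary state $\tfrac12(\mathsf U_i^n+\mathsf U_j^n)-\tfrac1{2\lambda}(\mathbb f(\mathsf U_j^n)-\mathbb f(\mathsf U_i^n))\bm n_{ij}$ for some unit vector $\bm n_{ij}$, where $\mathbb f$ is the Euler flux; only the hypothesis that these states lie in $\mathcal A$ is used. A complete equation of state is a function $e(\tau,s)$ giving specific internal energy in terms of specific volume and specific entropy. *)

theory Defs
  imports "HOL-Analysis.Analysis"
begin

type_synonym ('d) state = "real \<times> (real^'d) \<times> real"

definition dens :: "('d::finite) state \<Rightarrow> real" where "dens u = fst u"
definition mom :: "('d::finite) state \<Rightarrow> real^'d" where "mom u = fst (snd u)"
definition toten :: "('d::finite) state \<Rightarrow> real" where "toten u = snd (snd u)"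

definition int_energy :: "('d::finite) state \<Rightarrow> real" where
  "int_energy u = toten u / dens u - (norm (mom u))^2 / (2 * (dens u)^2)"

definition admissible_set :: "(real \<Rightarrow> real \<Rightarrow> real) \<Rightarrow> real \<Rightarrow> ('d::finite) state set" where
  "admissible_set e s0 = {u. dens u > 0 \<and>
      dens u * int_energy u \<ge> dens u * e (1 / dens u) s0}"

definition spec_entropy :: "(real \<Rightarrow> real \<Rightarrow> real) \<Rightarrow> ('d::finite) state \<Rightarrow> real" where
  "spec_entropy e u = (SOME s. e (1 / dens u) s = int_energy u)"

definition pressure :: "(real \<Rightarrow> real \<Rightarrow> real) \<Rightarrow> ('d::finite) state \<Rightarrow> real" where
  "pressure e u = - deriv (\<lambda>\<tau>. e \<tau> (spec_entropy e u)) (1 / dens u)"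

definition euler_flux_n :: "(real \<Rightarrow> real \<Rightarrow> real) \<Rightarrow> ('d::finite) state \<Rightarrow> real^'d \<Rightarrow> ('d::finite) state" where
  "euler_flux_n e u n =
     (let \<rho> = dens u; m = mom u; E = toten u; p = pressure e u; v = (m \<bullet> n) / \<rho>
      in (m \<bullet> n, v *\<^sub>R m + p *\<^sub>R n, v * (E + p)))"

definition bar_state :: "(real \<Rightarrow> real \<Rightarrow> real) \<Rightarrow> ('d::finite) state \<Rightarrow> ('d::finite) state \<Rightarrow> real^'d \<Rightarrow> real \<Rightarrow> ('d::finite) state" where
  "bar_state e Ui Uj n lam =
     (1/2) *\<^sub>R (Ui + Uj) - (1 / (2 * lam)) *\<^sub>R (euler_flux_n e Uj n - euler_flux_n e Ui n)"

end

theory Submission imports Defs begin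

lemma adm_iff: "u \<in> admissible_set e s0 \<longleftrightarrow> dens u > 0 \<and>
   toten u \<ge> (norm (mom u))^2/(2*dens u) + dens u * e (1/dens u) s0"
proof -
  have "dens u > 0 \<Longrightarrow> dens u * int_energy u = toten u - (norm (mom u))^2/(2*dens u)"
    unfolding int_energy_def by (simp add: field_simps power2_eq_square)
  then show ?thesis unfolding admissible_set_def by auto
qed

lemma scal: fixes a b r1 r2 p q :: real
  assumes "a \<ge> 0" "b \<ge> 0" "r1 > 0" "r2 > 0" "a*r1+b*r2 > 0"
  shows "(a*p+b*q)^2/(2*(a*r1+b*r2)) \<le> a*(p^2/(2*r1)) + b*(q^2/(2*r2))"
proof -
  have key: "(a*r1+b*r2)*(a*p^2/r1 + b*q^2/r2) - (a*p+b*q)^2 = a*b*(p*r2-q*r1)^2/(r1*r2)"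
    using assms by (simp add: field_simps power2_eq_square)
  have "0 \<le> a*b*(p*r2-q*r1)^2/(r1*r2)" using assms by simp
  hence "(a*p+b*q)^2 \<le> (a*r1+b*r2)*(a*p^2/r1 + b*q^2/r2)" using key by linarith
  hence "(a*p+b*q)^2/(a*r1+b*r2) \<le> a*p^2/r1 + b*q^2/r2"
    using assms by (simp add: divide_le_eq mult.commute)
  have e1: "(a*p+b*q)^2/(2*(a*r1+b*r2)) = ((a*p+b*q)^2/(a*r1+b*r2))/2" by simp
  have e2: "a*(p^2/(2*r1)) + b*(q^2/(2*r2)) = (a*p^2/r1 + b*q^2/r2)/2" by (simp add: field_simps)
  show ?thesis unfolding e1 e2 using \<open>(a*p+b*q)^2/(a*r1+b*r2) \<le> a*p^2/r1 + b*q^2/r2\<close> by (rule divide_right_mono) simp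
qed

lemma adm_convex:
  assumes cv: "convex_on {0<..} (\<lambda>\<tau>. e \<tau> s0)"
  shows "convex (admissible_set e s0 :: ('d::finite) state set)"
proof (rule convexI)
  fix u v :: "'d state" and a b :: real
  assume u: "u \<in> admissible_set e s0" and v: "v \<in> admissible_set e s0"
    and a: "0 \<le> a" and b: "0 \<le> b" and ab: "a + b = 1"
  let ?w = "a *\<^sub>R u + b *\<^sub>R v"
  define r1 where "r1 = dens u"
  define r2 where "r2 = dens v"
  have r1: "r1 > 0" and r2: "r2 > 0" using u v unfolding adm_iff r1_def r2_def by auto
  have dw: "dens ?w = a*r1 + b*r2" by (simp add: dens_def r1_def r2_def)
  have mw: "mom ?w = a *\<^sub>R mom u + b *\<^sub>R mom v" by (simp add: mom_def)
  have Ew: "toten ?w = a * toten u + b * toten v" by (simp add: toten_def)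
  have rw: "a*r1+b*r2 > 0"
  proof (cases "a = 0")
    case True then show ?thesis using ab r2 by simp
  next
    case False then show ?thesis using a b r1 r2 by (simp add: add_pos_nonneg)
  qed
  have n1: "(norm (mom ?w))^2/(2*dens ?w) \<le> a*((norm (mom u))^2/(2*r1)) + b*((norm (mom v))^2/(2*r2))"
  proof -
    have "norm (mom ?w) \<le> a * norm (mom u) + b * norm (mom v)"
      unfolding mw using a b by (metis abs_of_nonneg norm_scaleR norm_triangle_ineq)
    hence "(norm (mom ?w))^2 \<le> (a * norm (mom u) + b * norm (mom v))^2"
      by (simp add: power_mono)
    hence "(norm (mom ?w))^2/(2*dens ?w) \<le> (a * norm (mom u) + b * norm (mom v))^2/(2*(a*r1+b*r2))"
      unfolding dw using rw by (simp add: divide_right_mono)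
    also have "\<dots> \<le> a*((norm (mom u))^2/(2*r1)) + b*((norm (mom v))^2/(2*r2))"
      by (rule scal[OF a b r1 r2 rw])
    finally show ?thesis .
  qed
  have n2: "dens ?w * e (1/dens ?w) s0 \<le> a*(r1 * e (1/r1) s0) + b*(r2 * e (1/r2) s0)"
  proof -
    define R where "R = a*r1+b*r2"
    have R: "R > 0" using rw R_def by simp
    have "e ((a*r1/R) * (1/r1) + (b*r2/R) * (1/r2)) s0 \<le> (a*r1/R) * e (1/r1) s0 + (b*r2/R) * e (1/r2) s0"
    proof -
      have t0: "0 \<le> b*r2/R" "b*r2/R \<le> 1" using a b r1 r2 R by (auto simp: R_def)
      have h: "e ((1 - b*r2/R) * (1/r1) + (b*r2/R) * (1/r2)) s0 \<le> (1 - b*r2/R) * e (1/r1) s0 + (b*r2/R) * e (1/r2) s0"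
        using convex_onD[OF cv t0, of "1/r1" "1/r2"] r1 r2 by simp
      have "1 - b*r2/R = a*r1/R" using R by (simp add: R_def field_simps)
      then show ?thesis using h by simp
    qed
    moreover have "(a*r1/R) * (1/r1) + (b*r2/R) * (1/r2) = 1/R"
      using r1 r2 R ab by (simp add: field_simps)
    ultimately have "e (1/R) s0 \<le> (a*r1/R) * e (1/r1) s0 + (b*r2/R) * e (1/r2) s0" by simp
    hence "R * e (1/R) s0 \<le> R * ((a*r1/R) * e (1/r1) s0 + (b*r2/R) * e (1/r2) s0)"
      using R by simp
    also have "\<dots> = a*(r1 * e (1/r1) s0) + b*(r2 * e (1/r2) s0)"
      using R by (simp add: field_simps)
    finally show ?thesis using dw R_def by simp
  qed
  have "toten u \<ge> (norm (mom u))^2/(2*r1) + r1 * e (1/r1) s0" using u unfolding adm_iff r1_def by auto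
  hence "a * toten u \<ge> a*((norm (mom u))^2/(2*r1) + r1 * e (1/r1) s0)" using a by (simp add: mult_left_mono)
  moreover have "toten v \<ge> (norm (mom v))^2/(2*r2) + r2 * e (1/r2) s0" using v unfolding adm_iff r2_def by auto
  hence "b * toten v \<ge> b*((norm (mom v))^2/(2*r2) + r2 * e (1/r2) s0)" using b by (simp add: mult_left_mono)
  ultimately have "toten ?w \<ge> (norm (mom ?w))^2/(2*dens ?w) + dens ?w * e (1/dens ?w) s0"
    using n1 n2 Ew by (simp add: algebra_simps)
  then show "?w \<in> admissible_set e s0" unfolding adm_iff using dw rw by auto
qed

lemma convex_sum2:
  fixes C :: "'a::real_vector set"
  assumes "finite A" "finite B" "convex C"
    and "(\<Sum>i\<in>A. f i) + (\<Sum>j\<in>B. g j) = 1"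
    and "\<And>i. i \<in> A \<Longrightarrow> f i \<ge> 0" "\<And>j. j \<in> B \<Longrightarrow> g j \<ge> 0"
    and "\<And>i. i \<in> A \<Longrightarrow> x i \<in> C" "\<And>j. j \<in> B \<Longrightarrow> y j \<in> C"
  shows "(\<Sum>i\<in>A. f i *\<^sub>R x i) + (\<Sum>j\<in>B. g j *\<^sub>R y j) \<in> C"
proof -
  let ?S = "Inl ` A \<union> Inr ` B"
  let ?a = "case_sum f g"
  let ?y = "case_sum x y"
  have fin: "finite ?S" using assms by simp
  have dis: "Inl ` A \<inter> Inr ` B = {}" by auto
  have s1: "(\<Sum>k\<in>?S. ?a k) = (\<Sum>i\<in>A. f i) + (\<Sum>j\<in>B. g j)"
    using assms(1,2) by (simp add: sum.union_disjoint[OF _ _ dis] sum.reindex)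
  have s2: "(\<Sum>k\<in>?S. ?a k *\<^sub>R ?y k) = (\<Sum>i\<in>A. f i *\<^sub>R x i) + (\<Sum>j\<in>B. g j *\<^sub>R y j)"
    using assms(1,2) by (simp add: sum.union_disjoint[OF _ _ dis] sum.reindex)
  have "(\<Sum>k\<in>?S. ?a k *\<^sub>R ?y k) \<in> C"
    by (rule convex_sum[OF fin assms(3)]) (use assms s1 in auto)
  then show ?thesis using s2 by simp
qed

theorem proposition4p1:
  fixes e :: "real \<Rightarrow> real \<Rightarrow> real" and s0 :: real
    and V :: "'v set" and I :: "'v \<Rightarrow> 'v set"
    and U :: "'v \<Rightarrow> ('d::finite) state"
    and nv :: "'v \<Rightarrow> 'v \<Rightarrow> real^'d"
    and lam :: "'v \<Rightarrow> 'v \<Rightarrow> real"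
    and \<omega> \<mu> :: "'v \<Rightarrow> 'v \<Rightarrow> real"
  assumes convex_isentrope: "convex_on {0<..} (\<lambda>\<tau>. e \<tau> s0)"
    and finV: "finite V"
    and I_sub: "\<And>i. i \<in> V \<Longrightarrow> I i \<subseteq> V"
    and I_self: "\<And>i. i \<in> V \<Longrightarrow> i \<in> I i"
    and U_adm: "\<And>i. i \<in> V \<Longrightarrow> U i \<in> admissible_set e s0"
    and n_unit: "\<And>i j. i \<in> V \<Longrightarrow> j \<in> I i \<Longrightarrow> norm (nv i j) = 1"
    and lam_pos: "\<And>i j. i \<in> V \<Longrightarrow> j \<in> I i \<Longrightarrow> lam i j > 0"
    and bar_adm: "\<And>i j. i \<in> V \<Longrightarrow> j \<in> I i \<Longrightarrow>
                     bar_state e (U i) (U j) (nv i j) (lam i j) \<in> admissible_set e s0"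
    and \<omega>_range: "\<And>i k. i \<in> V \<Longrightarrow> k \<in> I i \<Longrightarrow> 0 \<le> \<omega> i k \<and> \<omega> i k \<le> 1"
    and \<mu>_range: "\<And>i j. i \<in> V \<Longrightarrow> j \<in> I i - {i} \<Longrightarrow> 0 \<le> \<mu> i j \<and> \<mu> i j \<le> 1"
    and sum_one: "\<And>i. i \<in> V \<Longrightarrow>
                     (\<Sum>k\<in>I i. \<omega> i k) + (\<Sum>j\<in>I i - {i}. \<mu> i j) = 1"
  shows "\<forall>i\<in>V. (\<Sum>k\<in>I i. \<omega> i k *\<^sub>R U k)
              + (\<Sum>j\<in>I i - {i}. \<mu> i j *\<^sub>R bar_state e (U i) (U j) (nv i j) (lam i j))
            \<in> admissible_set e s0"
proof
  fix i assume i: "i \<in> V"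
  have fin: "finite (I i)" using finite_subset[OF I_sub[OF i] finV] .
  show "(\<Sum>k\<in>I i. \<omega> i k *\<^sub>R U k)
              + (\<Sum>j\<in>I i - {i}. \<mu> i j *\<^sub>R bar_state e (U i) (U j) (nv i j) (lam i j))
            \<in> admissible_set e s0"
    by (rule convex_sum2[OF fin _ adm_convex[of e s0, OF convex_isentrope] sum_one[OF i]])
       (use fin i I_sub \<omega>_range \<mu>_range U_adm bar_adm in \<open>auto intro!: U_adm\<close>)
qed

end
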